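(* There exists a weak consistent digital ray system (WCDR) $R_o$ in $\mathbb{Z}^2$ whose error in the $L_\infty$ metric is exactly $1.5$; that is, $\sup_{p\in\mathbb{Z}^2} E(R_o(p)) = 1.5$.
   Context: Consider the unit grid graph on $\mathbb{Z}^2$: two points $p=(p_x,p_y)$, $q=(q_x,q_y)$ are adjacent iff $|p_x-q_x|+|p_y-q_y|=1$. Fix a root $o\in\mathbb{Z}^2$. A digital ray system $R_o$ assigns to every $p\in\mathbb{Z}^2$ a set $R_o(p)\subseteq\mathbb{Z}^2$ (the digital segment from $o$ to $p$). It is a weak consistent digital ray system (WCDR) if: (S1) for every $p$, $R_o(p)$ is the vertex set of a path from $o$ to $p$ in the grid graph; (S3) (subsegment property) for every $p$ and every $q\in R_o(p)$, $R_o(q)\subseteq R_o(p)$; (S5) (monotonicity) for every $p$, if $p_x=o_x$ then every $r\in R_o(p)$ has $r_x=o_x$, and if $p_y=o_y$ then every $r\in R_o(p)$ has $r_y=o_y$. (The prolongation property is not required.) The error of a segment is $E(R_o(p))=\max_{v\in R_o(p)} \mathrm{dist}_\infty(v,\overline{op})$, where $\overline{op}$ is the Euclidean segment from $o$ to $p$ and $\mathrm{dist}_\infty$ is the $L_\infty$ distance from a point to a set. The error of the WCDR is $\sup_{p\in\mathbb{Z}^2}E(R_o(p))$. *)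

theory Defs
  imports "HOL-Analysis.Analysis"
begin

type_synonym gpt = "int \<times> int"

definition grid_adj :: "gpt \<Rightarrow> gpt \<Rightarrow> bool" where
  "grid_adj p q \<longleftrightarrow> \<bar>fst p - fst q\<bar> + \<bar>snd p - snd q\<bar> = 1"

definition is_grid_path_set :: "gpt set \<Rightarrow> gpt \<Rightarrow> gpt \<Rightarrow> bool" where
  "is_grid_path_set S a b \<longleftrightarrow>
     (\<exists>xs. xs \<noteq> [] \<and> distinct xs \<and> hd xs = a \<and> last xs = b \<and> set xs = S \<and>
           (\<forall>i. Suc i < length xs \<longrightarrow> grid_adj (xs ! i) (xs ! Suc i)))"

text \<open>Weak consistent digital ray system with root r0: axioms (S1), (S3), (S5).\<close>
definition WCDR :: "gpt \<Rightarrow> (gpt \<Rightarrow> gpt set) \<Rightarrow> bool" where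
  "WCDR r0 R \<longleftrightarrow>
     (\<forall>p. is_grid_path_set (R p) r0 p) \<and>
     (\<forall>p. \<forall>q\<in>R p. R q \<subseteq> R p) \<and>
     (\<forall>p. (fst p = fst r0 \<longrightarrow> (\<forall>r\<in>R p. fst r = fst r0)) \<and>
          (snd p = snd r0 \<longrightarrow> (\<forall>r\<in>R p. snd r = snd r0)))"

definition rpt :: "gpt \<Rightarrow> real \<times> real" where
  "rpt p = (real_of_int (fst p), real_of_int (snd p))"

definition linf_dist :: "real \<times> real \<Rightarrow> real \<times> real \<Rightarrow> real" where
  "linf_dist u v = max \<bar>fst u - fst v\<bar> \<bar>snd u - snd v\<bar>"

definition euclid_seg :: "gpt \<Rightarrow> gpt \<Rightarrow> (real \<times> real) set" where
  "euclid_seg r0 p = closed_segment (rpt r0) (rpt p)"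

definition linf_dist_set :: "real \<times> real \<Rightarrow> (real \<times> real) set \<Rightarrow> real" where
  "linf_dist_set v A = (INF a\<in>A. linf_dist v a)"

definition seg_error :: "gpt \<Rightarrow> (gpt \<Rightarrow> gpt set) \<Rightarrow> gpt \<Rightarrow> real" where
  "seg_error r0 R p = (SUP v\<in>R p. linf_dist_set (rpt v) (euclid_seg r0 p))"

end

theory Submission
  imports Defs
begin


definition blk :: "nat \<Rightarrow> nat" where "blk n = (LEAST k. n \<le> 2^(k+1))"

lemma blk_props: assumes "2 \<le> n" shows "2^(blk n) < n \<and> n \<le> 2^(blk n + 1)"
proof -
  have ex0: "n < 2^n" by (rule less_exp)
  have ex1: "(2::nat)^(n+1) = 2^n + 2^n" by simp
  have ex: "n \<le> 2^(n+1)" using ex0 ex1 by linarith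
  have a: "n \<le> 2^(blk n + 1)" unfolding blk_def by (rule LeastI[of _ n], rule ex)
  have b: "2^(blk n) < n"
  proof (cases "blk n")
    case 0 then show ?thesis using assms by simp
  next
    case (Suc j)
    have "j < blk n" using Suc by simp
    then have "\<not> n \<le> 2^(j+1)" unfolding blk_def by (rule not_less_Least)
    then show ?thesis using Suc by simp
  qed
  show ?thesis using a b by simp
qed


lemma blk_eq: assumes "2^k < n" "n \<le> 2^(k+1)" shows "blk n = k"
proof -
  have "1 \<le> (2::nat)^k" by simp
  then have n2: "2 \<le> n" using assms(1) by linarith
  have le: "blk n \<le> k" unfolding blk_def by (rule Least_le) (rule assms(2))
  moreover have "\<not> blk n < k"
  proof
    assume "blk n < k"
    then have "(2::nat)^(blk n + 1) \<le> 2^k" by (intro power_increasing) auto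
    with blk_props[OF n2] assms(1) show False by linarith
  qed
  ultimately show ?thesis by simp
qed

lemma blk_mono: assumes "2 \<le> m" "m \<le> n" shows "blk m \<le> blk n"
proof (rule ccontr)
  assume "\<not> blk m \<le> blk n"
  then have "(2::nat)^(blk n + 1) \<le> 2^(blk m)" by (intro power_increasing) auto
  with blk_props[OF assms(1)] blk_props[of n] assms show False by linarith
qed

definition hh :: "nat \<Rightarrow> nat" where "hh m = 2^(blk m)"

lemma hh_pos: "0 < hh m" by (simp add: hh_def)

lemma hh_props: "2 \<le> m \<Longrightarrow> hh m < m \<and> m \<le> 2 * hh m"
  using blk_props[of m] by (simp add: hh_def)

lemma hh_dvd: "2 \<le> m \<Longrightarrow> m \<le> n \<Longrightarrow> hh m dvd hh n"
  unfolding hh_def by (rule le_imp_power_dvd, rule blk_mono)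

definition cidx :: "nat \<Rightarrow> nat \<Rightarrow> nat \<Rightarrow> nat" where "cidx a n m = (a * hh m) div n"

definition gpos :: "nat \<Rightarrow> nat \<Rightarrow> nat \<Rightarrow> nat" where
  "gpos a n m = (if m \<le> 1 then m else ((2 * cidx a n m + 1) * m + hh m) div (2 * hh m))"

lemma divmod_bounds: "0 < (d::nat) \<Longrightarrow> x div d * d \<le> x \<and> x < x div d * d + d"
  using div_mult_mod_eq[of x d] mod_less_divisor[of d x] by linarith

lemma cidx_bounds: assumes "0 < n"
  shows "cidx a n m * n \<le> a * hh m \<and> a * hh m < cidx a n m * n + n"
  unfolding cidx_def by (rule divmod_bounds[OF assms])

lemma cidx_lt: assumes "a < n" shows "cidx a n m < hh m"
proof -
  have "a * hh m < hh m * n" using assms hh_pos[of m] by simp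
  then show ?thesis unfolding cidx_def by (rule less_mult_imp_div_less)
qed

lemma gpos_bounds:
  assumes "2 \<le> m"
  shows "gpos a n m * (2 * hh m) \<le> (2 * cidx a n m + 1) * m + hh m \<and>
         (2 * cidx a n m + 1) * m + hh m < gpos a n m * (2 * hh m) + 2 * hh m"
  using assms divmod_bounds[of "2 * hh m" "(2 * cidx a n m + 1) * m + hh m"] hh_pos[of m]
  unfolding gpos_def by simp

lemma gpos_range:
  assumes "2 \<le> m" "a < n"
  shows "1 \<le> gpos a n m \<and> gpos a n m + 1 \<le> m"
proof -
  let ?h = "hh m" and ?i = "cidx a n m"
  have hm: "?h < m" "m \<le> 2 * ?h" using hh_props[OF assms(1)] by auto
  have il: "?i + 1 \<le> ?h" using cidx_lt[OF assms(2), of m] by simp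
  have x1: "2 * ?h \<le> (2 * ?i + 1) * m + ?h" using hm by (simp add: algebra_simps)
  have "(2 * ?i + 2) * m \<le> (2 * ?h) * m" using il by (intro mult_le_mono1) linarith
  moreover have "(2 * ?i + 2) * m = (2 * ?i + 1) * m + m" by (simp add: algebra_simps)
  ultimately have "(2 * ?i + 1) * m + ?h < 2 * ?h * m" using hm by linarith
  then have x2: "((2 * ?i + 1) * m + ?h) div (2 * ?h) < m"
    by (intro less_mult_imp_div_less) (simp add: algebra_simps)
  have "(2 * ?h) div (2 * ?h) \<le> ((2 * ?i + 1) * m + ?h) div (2 * ?h)"
    using x1 by (rule div_le_mono)
  then have x3: "1 \<le> ((2 * ?i + 1) * m + ?h) div (2 * ?h)" using hh_pos[of m] by auto
  show ?thesis using x2 x3 assms unfolding gpos_def by simp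
qed


lemma divstep: assumes "c \<le> d" "0 < (d::nat)"
  shows "(x + c) div d = x div d \<or> (x + c) div d = x div d + 1"
proof -
  have "(x + c) div d \<le> (x + d) div d" using assms by (intro div_le_mono) simp
  also have "\<dots> = x div d + 1" using assms by simp
  finally have "(x + c) div d \<le> x div d + 1" .
  moreover have "x div d \<le> (x + c) div d" by (intro div_le_mono) simp
  ultimately show ?thesis by linarith
qed

lemma cidx_same: "hh m = hh m' \<Longrightarrow> cidx a n m = cidx a n m'"
  unfolding cidx_def by simp

lemma blk_step: assumes "2 \<le> m"
  shows "blk (Suc m) = blk m \<or> (m = 2 * hh m \<and> blk (Suc m) = blk m + 1)"
proof (cases "blk (Suc m) = blk m")
  case True then show ?thesis by simp
next
  case False
  have "blk m \<le> blk (Suc m)" using assms by (intro blk_mono) auto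
  with False have lt: "blk m + 1 \<le> blk (Suc m)" by simp
  then have "(2::nat)^(blk m + 1) \<le> 2^(blk (Suc m))" by (intro power_increasing) auto
  with blk_props[of "Suc m"] blk_props[OF assms] assms have meq: "m = 2^(blk m + 1)" by auto
  have "blk (Suc m) = blk m + 1" using meq assms by (intro blk_eq) auto
  then show ?thesis using meq by (simp add: hh_def)
qed

lemma gpos_step: assumes "a < n"
  shows "gpos a n (Suc m) = gpos a n m \<or> gpos a n (Suc m) = gpos a n m + 1"
proof -
  consider "m = 0" | "m = 1" | "2 \<le> m" by linarith
  then show ?thesis
  proof cases
    case 1 then show ?thesis by (simp add: gpos_def)
  next
    case 2
    have "blk 2 = 0" by (rule blk_eq) auto
    then have h2: "hh 2 = 1" by (simp add: hh_def)
    moreover have c2: "cidx a n 2 = 0" using cidx_lt[OF assms, of 2] h2 by simp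
    ultimately have "gpos a n 2 = 1" unfolding gpos_def by simp
    moreover have "gpos a n 1 = 1" by (simp add: gpos_def)
    moreover have "Suc m = 2" using 2 by simp
    ultimately show ?thesis using 2 by (simp add: numeral_2_eq_2)
  next
    case 3
    let ?h = "hh m" and ?i = "cidx a n m"
    from blk_step[OF 3] show ?thesis
    proof
      assume eq: "blk (Suc m) = blk m"
      then have hq: "hh (Suc m) = ?h" by (simp add: hh_def)
      then have iq: "cidx a n (Suc m) = ?i" by (rule cidx_same)
      have "2 * ?i + 1 \<le> 2 * ?h" using cidx_lt[OF assms, of m] by simp
      from divstep[OF this, of "(2 * ?i + 1) * m + ?h"] hh_pos[of m]
      show ?thesis using 3 hq iq unfolding gpos_def by (simp add: algebra_simps)
    next
      assume bs: "m = 2 * hh m \<and> blk (Suc m) = blk m + 1"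
      then have m2: "m = 2 * ?h" by simp
      have hS: "hh (Suc m) = 2 * ?h" using bs by (simp add: hh_def)
      let ?j = "cidx a n (Suc m)"
      have n0: "0 < n" using assms by simp
      have jdef: "?j = (a * ?h * 2) div n" using hS by (simp add: cidx_def algebra_simps)
      have "?j div 2 = (a * ?h * 2) div (n * 2)" using jdef by (simp add: div_mult2_eq)
      also have "\<dots> = ?i" by (simp add: cidx_def)
      finally have jdiv: "?j div 2 = ?i" .
      have jlt: "?j < 2 * ?h" using cidx_lt[OF assms, of "Suc m"] hS by simp
      have g1: "gpos a n m = 2 * ?i + 1"
      proof -
        have "(2 * ?i + 1) * m + ?h = (2 * ?i + 1) * (2 * ?h) + ?h" using m2 by simp
        moreover have "((2 * ?i + 1) * (2 * ?h) + ?h) div (2 * ?h) = 2 * ?i + 1"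
          by (rule div_nat_eqI) (use hh_pos[of m] in \<open>simp_all add: algebra_simps\<close>)
        ultimately show ?thesis using 3 unfolding gpos_def by simp
      qed
      have g2: "gpos a n (Suc m) = ?j + 1"
      proof -
        have x: "(2 * ?j + 1) * Suc m + hh (Suc m) = (?j + 1) * (2 * hh (Suc m)) + (2 * ?j + 1)"
          using hS m2 by (simp add: algebra_simps)
        have "gpos a n (Suc m) = ((2 * ?j + 1) * Suc m + hh (Suc m)) div (2 * hh (Suc m))"
          using 3 by (simp add: gpos_def)
        also have "\<dots> = ((?j + 1) * (2 * hh (Suc m)) + (2 * ?j + 1)) div (2 * hh (Suc m))"
          by (simp only: x)
        also have "\<dots> = ?j + 1"
          by (rule div_nat_eqI) (use jlt hS hh_pos[of m] in \<open>simp_all add: algebra_simps\<close>)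
        finally show ?thesis .
      qed
      have "?j = 2 * ?i \<or> ?j = 2 * ?i + 1" using jdiv by linarith
      then show ?thesis using g1 g2 by auto
    qed
  qed
qed

lemma cidx_sub: assumes "2 \<le> m'" "m' \<le> m" "0 < n"
  shows "cidx a n m' = cidx a n m div (hh m div hh m')"
proof -
  obtain d where d: "hh m = hh m' * d" using hh_dvd[OF assms(1,2)] by (auto elim: dvdE)
  have d0: "d \<noteq> 0" using d hh_pos[of m] by auto
  have "hh m div hh m' = d" using d hh_pos[of m'] by simp
  moreover have "cidx a n m div d = (a * hh m' * d) div n div d"
    unfolding cidx_def d by (simp add: mult.assoc)
  moreover have "(a * hh m' * d) div n div d = (a * hh m' * d) div (n * d)" by (simp only: div_mult2_eq)
  moreover have "(a * hh m' * d) div (n * d) = cidx a n m'" unfolding cidx_def using d0 by (rule div_mult_mult2)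
  ultimately show ?thesis by simp
qed

lemma official_cidx: assumes "2 \<le> m" "a < n"
  shows "cidx (gpos a n m) m m = cidx a n m"
proof -
  let ?h = "hh m" and ?i = "cidx a n m" and ?g = "gpos a n m"
  have hm: "?h < m" "m \<le> 2 * ?h" using hh_props[OF assms(1)] by auto
  have gb: "?g * (2 * ?h) \<le> (2 * ?i + 1) * m + ?h" "(2 * ?i + 1) * m + ?h < ?g * (2 * ?h) + 2 * ?h"
    using gpos_bounds[OF assms(1)] by auto
  have e1: "(2 * ?i + 1) * m = 2 * (?i * m) + m" by (simp add: algebra_simps)
  have e2: "?g * (2 * ?h) = 2 * (?g * ?h)" by (simp add: algebra_simps)
  have l1: "?i * m \<le> ?g * ?h" using gb e1 e2 hm by linarith
  have l2: "?g * ?h < ?i * m + m" using gb e1 e2 hm by linarith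
  have "(?g * ?h) div m = ?i"
    by (rule div_nat_eqI) (use l1 l2 in \<open>simp_all add: algebra_simps\<close>)
  then show ?thesis by (simp add: cidx_def)
qed

lemma gpos_official: assumes "2 \<le> m" "a < n" "m' \<le> m"
  shows "gpos (gpos a n m) m m' = gpos a n m'"
proof (cases "m' \<le> 1")
  case True then show ?thesis by (simp add: gpos_def)
next
  case False
  then have m2: "2 \<le> m'" by simp
  have "cidx (gpos a n m) m m' = cidx (gpos a n m) m m div (hh m div hh m')"
    using assms m2 by (intro cidx_sub) auto
  also have "\<dots> = cidx a n m div (hh m div hh m')" using official_cidx[OF assms(1,2)] by simp
  also have "\<dots> = cidx a n m'" using assms m2 by (intro cidx_sub[symmetric]) auto
  finally show ?thesis using False by (simp add: gpos_def)
qed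




lemma gpos_le: assumes "a < n" shows "gpos a n m \<le> m"
  using gpos_range[OF _ assms, of m] by (cases "m \<le> 1") (auto simp: gpos_def)

lemma err_core:
  fixes G I H A N M :: real
  assumes "0 < H" "0 < N" "0 \<le> M" "M \<le> 2 * H"
    "I * N \<le> A * H" "A * H < I * N + N"
    "G * (2 * H) \<le> (2 * I + 1) * M + H" "(2 * I + 1) * M + H < G * (2 * H) + 2 * H"
  shows "\<bar>G - A * M / N\<bar> \<le> 3 / 2"
proof -
  define u where "u = 2 * H * G - (2 * I + 1) * M"
  define v where "v = (2 * I + 1) * N - 2 * H * A"
  have u1: "\<bar>u\<bar> \<le> H" unfolding u_def abs_le_iff using assms(7,8) by (simp add: algebra_simps)
  have v1: "\<bar>v\<bar> \<le> N" unfolding v_def abs_le_iff using assms(5,6) by (simp add: algebra_simps)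
  have a1: "\<bar>N * u\<bar> \<le> N * H" using u1 assms(2) by (simp add: abs_mult)
  have a2: "\<bar>M * v\<bar> \<le> M * N" using v1 assms(3) by (simp add: abs_mult mult_left_mono)
  have a3: "M * N \<le> 2 * H * N" using assms(2,4) by (simp add: mult_right_mono)
  have id: "2 * H * N * (G - A * M / N) = N * u + M * v"
    using assms(2) unfolding u_def v_def by (simp add: field_simps)
  have "\<bar>N * u + M * v\<bar> \<le> \<bar>N * u\<bar> + \<bar>M * v\<bar>" by (rule abs_triangle_ineq)
  then have "\<bar>2 * H * N * (G - A * M / N)\<bar> \<le> 3 * (H * N)"
    unfolding id using a1 a2 a3 by (simp add: algebra_simps)
  then have "2 * H * N * \<bar>G - A * M / N\<bar> \<le> 2 * H * N * (3 / 2)"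
    using assms(1,2) by (simp add: abs_mult)
  then show ?thesis using assms(1,2) by (simp add: mult_le_cancel_left_pos)
qed

lemma err_bound: assumes "a < n"
  shows "\<bar>real (gpos a n m) - real a * real m / real n\<bar> \<le> 3 / 2"
proof (cases "m \<le> 1")
  case True
  have n0: "0 < real n" using assms by simp
  have "real a \<le> real n" using assms by simp
  then have "0 \<le> real a / real n" "real a / real n \<le> 1" using n0 by auto
  moreover have "gpos a n m = m" using True by (simp add: gpos_def)
  moreover have "real m \<le> 1" "0 \<le> real m" using True by auto
  ultimately show ?thesis
  proof -
    have e: "real a * real m / real n = real m * (real a / real n)" by simp
    have q1: "real a * real m / real n \<le> real m" unfolding e
      by (rule mult_left_le) (use \<open>real a / real n \<le> 1\<close> in auto)
    have q0: "0 \<le> real a * real m / real n" by simp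
    have "real (gpos a n m) = real m" using \<open>gpos a n m = m\<close> by simp
    then show ?thesis using q0 q1 \<open>real m \<le> 1\<close> unfolding abs_le_iff by linarith
  qed
next
  case False
  then have m2: "2 \<le> m" by simp
  have n0: "0 < n" using assms by simp
  have hm: "hh m < m" "m \<le> 2 * hh m" using hh_props[OF m2] by auto
  have cb: "cidx a n m * n \<le> a * hh m" "a * hh m < cidx a n m * n + n" using cidx_bounds[OF n0] by auto
  have gb: "gpos a n m * (2 * hh m) \<le> (2 * cidx a n m + 1) * m + hh m"
     "(2 * cidx a n m + 1) * m + hh m < gpos a n m * (2 * hh m) + 2 * hh m"
    using gpos_bounds[OF m2] by auto
  show ?thesis
  proof (rule err_core[where I = "real (cidx a n m)" and H = "real (hh m)"])
    show "0 < real (hh m)" using hh_pos by simp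
    show "0 < real n" using n0 by simp
    show "0 \<le> real m" by simp
    show "real m \<le> 2 * real (hh m)" using hm by simp
    show "real (cidx a n m) * real n \<le> real a * real (hh m)"
      using cb by (simp flip: of_nat_mult)
    show "real a * real (hh m) < real (cidx a n m) * real n + real n"
      using cb by (simp flip: of_nat_mult of_nat_add)
    have "real (gpos a n m * (2 * hh m)) \<le> real ((2 * cidx a n m + 1) * m + hh m)"
      by (simp only: of_nat_le_iff gb(1))
    then show "real (gpos a n m) * (2 * real (hh m)) \<le> (2 * real (cidx a n m) + 1) * real m + real (hh m)"
      by (simp add: algebra_simps)
    have "real ((2 * cidx a n m + 1) * m + hh m) < real (gpos a n m * (2 * hh m) + 2 * hh m)"
      by (simp only: of_nat_less_iff gb(2))
    then show "(2 * real (cidx a n m) + 1) * real m + real (hh m) < real (gpos a n m) * (2 * real (hh m)) + 2 * real (hh m)"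
      by (simp add: algebra_simps)
  qed
qed


lemma rlt1: assumes "real (x::nat) < real y + 1" shows "x \<le> y"
proof -
  have "real x < real (y + 1)" using assms by simp
  then have "x < y + 1" by (simp only: of_nat_less_iff)
  then show ?thesis by simp
qed

lemma rlt2: assumes "real (x::nat) < real y + 2" shows "x \<le> y + 1"
proof -
  have "real x < real (y + 2)" using assms by simp
  then have "x < y + 2" by (simp only: of_nat_less_iff)
  then show ?thesis by simp
qed

lemma leaf_core:
  fixes P Q R a :: nat and z c :: real
  assumes f1: "real P \<le> z + 1/2" "z + 1/2 < real P + 1"
    and g1: "real Q \<le> z - c + 1/2" "z - c + 1/2 < real Q + 1"
    and g2: "real R \<le> z + c + 1/2" "z + c + 1/2 < real R + 1"
    and f3: "z - 1 \<le> real a" "real a < z + 1"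
    and cc: "0 < c" "c < 1" "c \<noteq> 1/2"
    and ne: "P \<noteq> a" "Q + 1 \<noteq> a" "Q \<noteq> a"
  shows "R = a \<or> R = a + 1"
proof -
  have A: "P \<le> a + 1" using f1 f3 by (intro rlt2) linarith
  have B: "a \<le> P + 1" using f1 f3 by (intro rlt2) linarith
  from A B ne(1) have "P = a + 1 \<or> P + 1 = a" by linarith
  then show ?thesis
  proof
    assume Pa: "P + 1 = a"
    have Pr: "real P + 1 = real a" using Pa by (metis of_nat_1 of_nat_add)
    have p1a: "Q \<le> P" using g1 f1 cc by (intro rlt1) linarith
    have p1b: "P \<le> Q + 1" using g1 f3 cc Pr by (intro rlt1) linarith
    have "Q + 1 = P" using p1a p1b ne Pa by linarith
    then have "real Q + 1 = real P" by (metis of_nat_1 of_nat_add)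
    then have c2: "c > 1/2" using g1 f3 Pr by linarith
    have "R \<le> P + 1" using g2 f1 cc by (intro rlt2) linarith
    moreover have "P + 1 \<le> R + 1 \<and> P \<noteq> R"
    proof -
      have "P \<le> R" using g2 f3 Pr c2 by (intro rlt1) linarith
      moreover have "real R \<noteq> real P" using g2 f3 Pr c2 by linarith
      ultimately show ?thesis by auto
    qed
    ultimately show ?thesis using Pa by linarith
  next
    assume Pa: "P = a + 1"
    have Pr: "real P = real a + 1" using Pa by simp
    have p1a: "Q \<le> P" using g1 f1 cc by (intro rlt1) linarith
    have p1b: "P \<le> Q + 1" using g1 f1 cc by (intro rlt2) linarith
    have "Q = P" using p1a p1b ne Pa by linarith
    then have "real Q = real P" by simp
    then have c2: "c < 1/2" using g1 f3 Pr cc by linarith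
    have "R \<le> P" using g2 f3 Pr c2 by (intro rlt1) linarith
    moreover have "P \<le> R" using g2 f1 cc by (intro rlt1) linarith
    ultimately show ?thesis using Pa by linarith
  qed
qed


lemma conv_bounds:
  fixes P X h :: nat
  assumes h0: "0 < h" and b1: "P * (2 * h) \<le> X + h" and b2: "X + h < P * (2 * h) + 2 * h"
  shows "real P \<le> real X / (2 * real h) + 1/2 \<and> real X / (2 * real h) + 1/2 < real P + 1"
proof -
  have r1: "real P * (2 * real h) \<le> real X + real h"
  proof -
    have "real (P * (2 * h)) \<le> real (X + h)" by (simp only: of_nat_le_iff b1)
    then show ?thesis by simp
  qed
  have r2: "real X + real h < real P * (2 * real h) + 2 * real h"
  proof -
    have "real (X + h) < real (P * (2 * h) + 2 * h)" by (simp only: of_nat_less_iff b2)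
    then show ?thesis by simp
  qed
  have hr: "0 < real h" using h0 by simp
  show ?thesis using r1 r2 hr by (simp add: field_simps)
qed

lemma gpos_odd4: assumes "a < n" shows "gpos a n 4 \<noteq> 2"
proof -
  have "blk 4 = 1" by (rule blk_eq) auto
  then have h4: "hh 4 = 2" by (simp add: hh_def)
  have "gpos a n 4 = ((2 * cidx a n 4 + 1) * 4 + 2) div 4" using h4 by (simp add: gpos_def)
  also have "\<dots> = 2 * cidx a n 4 + 1"
    by (rule div_nat_eqI) simp_all
  finally show ?thesis by presburger
qed

lemma leaf: assumes a0: "0 < a" and an: "a < n" and ne: "gpos a n n \<noteq> a" "gpos a n (n-1) + 1 \<noteq> a" "gpos a n (n-1) \<noteq> a"
  shows "gpos a n (n+1) = a \<or> gpos a n (n+1) = a + 1"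
proof -
  have n2: "2 \<le> n" using a0 an by simp
  let ?h = "hh n" and ?i = "cidx a n n"
  have hp: "?h < n" "n \<le> 2 * ?h" using hh_props[OF n2] by auto
  have h0: "0 < ?h" by (rule hh_pos)
  consider "n = ?h + 1" | "n = 2 * ?h" | "?h + 1 < n" "n < 2 * ?h" using hp by linarith
  then show ?thesis
  proof cases
    case 1
    obtain h where hn: "hh n = h" by simp
    have n1: "n = h + 1" using 1 hn by simp
    obtain a' where a': "a = Suc a'" using a0 by (cases a) auto
    have ale: "a' < h" using an n1 a' by simp
    have ci: "cidx a n n = a'" unfolding cidx_def hn
      by (rule div_nat_eqI) (use n1 a' ale in \<open>simp_all add: algebra_simps\<close>)
    have "gpos a n n = ((2 * a' + 1) * n + h) div (2 * h)" using n2 ci hn by (simp add: gpos_def)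
    also have "\<dots> = a' + 1"
      by (rule div_nat_eqI) (use n1 ale in \<open>simp_all add: algebra_simps\<close>)
    finally have "gpos a n n = a" using a' by simp
    with ne show ?thesis by simp
  next
    case 2
    have p1: "(2::nat)^(blk n + 1) = 2 * ?h" by (simp add: hh_def)
    have p2: "(2::nat)^(blk n + 1 + 1) = 4 * ?h" by (simp add: hh_def)
    have b1: "2^(blk n + 1) < n + 1" using p1 2 by linarith
    have b2: "n + 1 \<le> 2^(blk n + 1 + 1)" using p2 2 h0 by linarith
    have "blk (n+1) = blk n + 1" by (rule blk_eq[OF b1 b2])
    then have hS: "hh (n+1) = 2 * ?h" by (simp add: hh_def)
    have an2: "a * hh (n+1) = a * n" using hS 2 by simp
    have cS: "cidx a n (n+1) = a" unfolding cidx_def an2 using n2 by simp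
    have "gpos a n (n+1) = ((2 * a + 1) * (n+1) + hh (n+1)) div (2 * hh (n+1))"
      using n2 cS by (simp add: gpos_def)
    also have "\<dots> = ((2 * a + 1) * (n+1) + n) div (2 * n)" using hS 2 by simp
    also have "\<dots> = a + 1"
      by (rule div_nat_eqI) (use an in \<open>simp_all add: algebra_simps\<close>)
    finally show ?thesis by simp
  next
    case 3
    have p0: "(2::nat)^(blk n) = ?h" by (simp add: hh_def)
    have p1: "(2::nat)^(blk n + 1) = 2 * ?h" by (simp add: hh_def)
    have bm: "blk (n-1) = blk n"
      by (rule blk_eq) (use p0 p1 3 in linarith)+
    have bp: "blk (n+1) = blk n"
      by (rule blk_eq) (use p0 p1 3 in linarith)+
    have hm: "hh (n-1) = ?h" "hh (n+1) = ?h" using bm bp by (simp_all add: hh_def)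
    have im: "cidx a n (n-1) = ?i" "cidx a n (n+1) = ?i"
      using cidx_same[OF hm(1)] cidx_same[OF hm(2)] by auto
    have m1: "2 \<le> n - 1" using 3 h0 by linarith
    have gbn: "gpos a n n * (2 * ?h) \<le> (2 * ?i + 1) * n + ?h"
        "(2 * ?i + 1) * n + ?h < gpos a n n * (2 * ?h) + 2 * ?h"
      using gpos_bounds[OF n2, of a n] by auto
    have gb1: "gpos a n (n-1) * (2 * ?h) \<le> (2 * ?i + 1) * (n-1) + ?h"
        "(2 * ?i + 1) * (n-1) + ?h < gpos a n (n-1) * (2 * ?h) + 2 * ?h"
      using gpos_bounds[OF m1, of a n] hm im by auto
    have gb2: "gpos a n (n+1) * (2 * ?h) \<le> (2 * ?i + 1) * (n+1) + ?h"
        "(2 * ?i + 1) * (n+1) + ?h < gpos a n (n+1) * (2 * ?h) + 2 * ?h"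
      using gpos_bounds[of "n+1" a n] n2 hm im by auto
    define z where "z = real ((2 * ?i + 1) * n) / (2 * real ?h)"
    define c where "c = real (2 * ?i + 1) / (2 * real ?h)"
    have hr: "0 < real ?h" using h0 by simp
    have e1: "real ((2 * ?i + 1) * (n-1)) / (2 * real ?h) = z - c"
      unfolding z_def c_def using n2 hr by (simp add: of_nat_diff field_simps)
    have e2: "real ((2 * ?i + 1) * (n+1)) / (2 * real ?h) = z + c"
      unfolding z_def c_def using hr by (simp add: field_simps)
    have F1: "real (gpos a n n) \<le> z + 1/2 \<and> z + 1/2 < real (gpos a n n) + 1"
      unfolding z_def by (rule conv_bounds[OF h0 gbn])
    have G1: "real (gpos a n (n-1)) \<le> z - c + 1/2 \<and> z - c + 1/2 < real (gpos a n (n-1)) + 1"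
      using conv_bounds[OF h0 gb1] unfolding e1 .
    have G2: "real (gpos a n (n+1)) \<le> z + c + 1/2 \<and> z + c + 1/2 < real (gpos a n (n+1)) + 1"
      using conv_bounds[OF h0 gb2] unfolding e2 .
    have cb: "?i * n \<le> a * ?h" "a * ?h < ?i * n + n" using cidx_bounds[of n a n] an by auto
    have cr1: "real ?i * real n \<le> real a * real ?h"
    proof -
      have "real (?i * n) \<le> real (a * ?h)" by (simp only: of_nat_le_iff cb(1))
      then show ?thesis by simp
    qed
    have cr2: "real a * real ?h < real ?i * real n + real n"
    proof -
      have "real (a * ?h) < real (?i * n + n)" by (simp only: of_nat_less_iff cb(2))
      then show ?thesis by simp
    qed
    have nr: "real n \<le> 2 * real ?h" using hp by simp
    have F3: "z - 1 \<le> real a \<and> real a < z + 1"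
      unfolding z_def using hr cr1 cr2 nr by (simp add: field_simps)
    have il: "?i < ?h" using cidx_lt[OF an] by simp
    have C1: "0 < c" unfolding c_def using hr by simp
    have C2: "c < 1" unfolding c_def using hr il by (simp add: field_simps)
    have C3: "c \<noteq> 1/2"
    proof
      assume "c = 1/2"
      then have "real (2 * ?i + 1) = real ?h" unfolding c_def using hr by (simp add: field_simps)
      then have eqh: "2 * ?i + 1 = ?h" by (simp only: of_nat_eq_iff)
      have "blk n \<noteq> 0"
      proof
        assume "blk n = 0" then have "?h = 1" by (simp add: hh_def)
        then show False using 3 by simp
      qed
      then have evh: "even ?h" by (simp add: hh_def)
      have "odd ?h" unfolding eqh[symmetric] by simp
      with evh show False by simp
    qed
    show ?thesis
      by (rule leaf_core[where z = z and c = c and P = "gpos a n n" and Q = "gpos a n (n-1)"])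
         (use F1 G1 G2 F3 C1 C2 C3 ne in auto)
  qed
qed




definition qadj :: "nat \<times> nat \<Rightarrow> nat \<times> nat \<Rightarrow> bool" where
  "qadj u w \<longleftrightarrow> \<bar>int (fst u) - int (fst w)\<bar> + \<bar>int (snd u) - int (snd w)\<bar> = 1"

definition qpath :: "(nat \<times> nat) set \<Rightarrow> nat \<times> nat \<Rightarrow> bool" where
  "qpath S p \<longleftrightarrow> (\<exists>xs. xs \<noteq> [] \<and> distinct xs \<and> hd xs = (0,0) \<and> last xs = p \<and> set xs = S \<and>
           (\<forall>i. Suc i < length xs \<longrightarrow> qadj (xs ! i) (xs ! Suc i)))"

lemma chain_map:
  assumes "\<forall>m<L. qadj (f m) (f (Suc m))"
  shows "\<forall>i. Suc i < length (map f [0..<Suc L]) \<longrightarrow> qadj (map f [0..<Suc L] ! i) (map f [0..<Suc L] ! Suc i)"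
proof (intro allI impI)
  fix i assume "Suc i < length (map f [0..<Suc L])"
  then have "i < L" by simp
  then show "qadj (map f [0..<Suc L] ! i) (map f [0..<Suc L] ! Suc i)"
    using assms by (simp del: upt_Suc add: nth_map_upt)
qed

lemma chain_map_app:
  assumes "\<forall>m<L. qadj (f m) (f (Suc m))" "qadj (f L) p"
  shows "\<forall>i. Suc i < length (map f [0..<Suc L] @ [p]) \<longrightarrow>
     qadj ((map f [0..<Suc L] @ [p]) ! i) ((map f [0..<Suc L] @ [p]) ! Suc i)"
proof (intro allI impI)
  fix i assume "Suc i < length (map f [0..<Suc L] @ [p])"
  then have "i \<le> L" by simp
  then consider "i < L" | "i = L" by linarith
  then show "qadj ((map f [0..<Suc L] @ [p]) ! i) ((map f [0..<Suc L] @ [p]) ! Suc i)"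
  proof cases
    case 1 then show ?thesis using assms by (simp del: upt_Suc add: nth_append nth_map_upt)
  next
    case 2 then show ?thesis using assms by (simp del: upt_Suc add: nth_append nth_map_upt)
  qed
qed


definition Lv :: "nat \<Rightarrow> nat \<Rightarrow> nat" where
  "Lv a b = (if gpos a (a+b) (a+b) = a then a+b
             else if gpos a (a+b) (a+b-1) + 1 = a \<or> gpos a (a+b) (a+b-1) = a then a+b-1 else a+b+1)"

definition qpt :: "nat \<Rightarrow> nat \<Rightarrow> nat \<Rightarrow> nat \<times> nat" where
  "qpt a n m = (gpos a n m, m - gpos a n m)"

definition genR :: "nat \<Rightarrow> nat \<Rightarrow> (nat \<times> nat) set" where
  "genR a b = qpt a (a+b) ` {..Lv a b} \<union> {(a,b)}"

lemma qpt_sum: "a < n \<Longrightarrow> fst (qpt a n m) + snd (qpt a n m) = m"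
  using gpos_le[of a n m] by (simp add: qpt_def)

lemma qpt_step: "a < n \<Longrightarrow> qadj (qpt a n m) (qpt a n (Suc m))"
  using gpos_step[of a n m] gpos_le[of a n m] gpos_le[of a n "Suc m"]
  by (auto simp: qpt_def qadj_def)

lemma qpt_0: "qpt a n 0 = (0,0)" by (simp add: qpt_def gpos_def)
lemma qpt_1: "qpt a n 1 = (1,0)" by (simp add: qpt_def gpos_def)

lemma Lv_cases:
  assumes "0 < a" "0 < b"
  shows "(Lv a b = a + b \<and> gpos a (a+b) (a+b) = a) \<or>
         (Lv a b = a + b - 1 \<and> gpos a (a+b) (a+b) \<noteq> a \<and> (gpos a (a+b) (a+b-1) + 1 = a \<or> gpos a (a+b) (a+b-1) = a)) \<or>
         (Lv a b = a + b + 1 \<and> gpos a (a+b) (a+b) \<noteq> a \<and> (gpos a (a+b) (a+b+1) = a \<or> gpos a (a+b) (a+b+1) = a + 1))"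
proof -
  have an: "a < a + b" using assms by simp
  show ?thesis using leaf[OF assms(1) an] unfolding Lv_def by auto
qed

lemma genR_path:
  assumes a0: "0 < a" and b0: "0 < b"
  shows "qpath (genR a b) (a,b)"
proof -
  let ?n = "a + b" and ?L = "Lv a b"
  have an: "a < ?n" using b0 by simp
  have st: "\<forall>m<?L. qadj (qpt a ?n m) (qpt a ?n (Suc m))" using qpt_step[OF an] by blast
  have dmap: "distinct (map (qpt a ?n) [0..<Suc ?L])"
  proof -
    have "inj_on (qpt a ?n) (set [0..<Suc ?L])"
      by (rule inj_onI) (metis qpt_sum[OF an])
    then show ?thesis by (simp add: distinct_map del: upt_Suc)
  qed
  have setm: "set (map (qpt a ?n) [0..<Suc ?L]) = qpt a ?n ` {..?L}"
    by (auto simp del: upt_Suc)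
  have hdm: "hd (map (qpt a ?n) [0..<Suc ?L]) = (0,0)"
    by (simp del: upt_Suc add: hd_map qpt_0 upt_conv_Cons)
  have lastm: "last (map (qpt a ?n) [0..<Suc ?L]) = qpt a ?n ?L"
    by (simp add: last_map del: upt_Suc)
  from Lv_cases[OF a0 b0] consider
      (off) "?L = ?n" "gpos a ?n ?n = a"
    | (dn) "?L = ?n - 1" "gpos a ?n ?n \<noteq> a" "gpos a ?n (?n-1) + 1 = a \<or> gpos a ?n (?n-1) = a"
    | (up) "?L = ?n + 1" "gpos a ?n ?n \<noteq> a" "gpos a ?n (?n+1) = a \<or> gpos a ?n (?n+1) = a + 1"
    by blast
  then show ?thesis
  proof cases
    case off
    have pq: "qpt a ?n ?L = (a,b)" using off by (simp add: qpt_def)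
    show ?thesis unfolding qpath_def
    proof (intro exI conjI)
      show "map (qpt a ?n) [0..<Suc ?L] \<noteq> []" by simp
      show "distinct (map (qpt a ?n) [0..<Suc ?L])" by (rule dmap)
      show "hd (map (qpt a ?n) [0..<Suc ?L]) = (0,0)" by (rule hdm)
      show "last (map (qpt a ?n) [0..<Suc ?L]) = (a,b)" using lastm pq by simp
      show "set (map (qpt a ?n) [0..<Suc ?L]) = genR a b"
      proof -
        have "(a,b) \<in> qpt a ?n ` {..?L}" using pq by (metis atMost_iff image_eqI order_refl)
        then show ?thesis unfolding setm genR_def by auto
      qed
      show "\<forall>i. Suc i < length (map (qpt a ?n) [0..<Suc ?L]) \<longrightarrow>
          qadj (map (qpt a ?n) [0..<Suc ?L] ! i) (map (qpt a ?n) [0..<Suc ?L] ! Suc i)"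
        by (rule chain_map[OF st])
    qed
  next
    case dn
    have adj: "qadj (qpt a ?n ?L) (a,b)"
      using dn b0 a0 by (auto simp: qpt_def qadj_def)
    have notin: "(a,b) \<notin> qpt a ?n ` {..?L}"
    proof
      assume "(a,b) \<in> qpt a ?n ` {..?L}"
      then obtain m where "m \<le> ?L" "qpt a ?n m = (a,b)" by auto
      then show False using qpt_sum[OF an, of m] dn b0 by simp
    qed
    show ?thesis unfolding qpath_def
    proof (intro exI conjI)
      show "map (qpt a ?n) [0..<Suc ?L] @ [(a,b)] \<noteq> []" by simp
      show "distinct (map (qpt a ?n) [0..<Suc ?L] @ [(a,b)])" using dmap notin setm by (simp del: upt_Suc)
      show "hd (map (qpt a ?n) [0..<Suc ?L] @ [(a,b)]) = (0,0)" using hdm by (simp del: upt_Suc add: hd_append)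
      show "last (map (qpt a ?n) [0..<Suc ?L] @ [(a,b)]) = (a,b)" by simp
      show "set (map (qpt a ?n) [0..<Suc ?L] @ [(a,b)]) = genR a b"
        unfolding genR_def using setm by (simp del: upt_Suc)
      show "\<forall>i. Suc i < length (map (qpt a ?n) [0..<Suc ?L] @ [(a,b)]) \<longrightarrow>
          qadj ((map (qpt a ?n) [0..<Suc ?L] @ [(a,b)]) ! i) ((map (qpt a ?n) [0..<Suc ?L] @ [(a,b)]) ! Suc i)"
        by (rule chain_map_app[OF st adj])
    qed
  next
    case up
    have adj: "qadj (qpt a ?n ?L) (a,b)"
      using up by (auto simp: qpt_def qadj_def)
    have notin: "(a,b) \<notin> qpt a ?n ` {..?L}"
    proof
      assume "(a,b) \<in> qpt a ?n ` {..?L}"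
      then obtain m where m: "m \<le> ?L" "qpt a ?n m = (a,b)" by auto
      then have "m = ?n" using qpt_sum[OF an, of m] by simp
      then show False using m up by (simp add: qpt_def)
    qed
    show ?thesis unfolding qpath_def
    proof (intro exI conjI)
      show "map (qpt a ?n) [0..<Suc ?L] @ [(a,b)] \<noteq> []" by simp
      show "distinct (map (qpt a ?n) [0..<Suc ?L] @ [(a,b)])" using dmap notin setm by (simp del: upt_Suc)
      show "hd (map (qpt a ?n) [0..<Suc ?L] @ [(a,b)]) = (0,0)" using hdm by (simp del: upt_Suc add: hd_append)
      show "last (map (qpt a ?n) [0..<Suc ?L] @ [(a,b)]) = (a,b)" by simp
      show "set (map (qpt a ?n) [0..<Suc ?L] @ [(a,b)]) = genR a b"
        unfolding genR_def using setm by (simp del: upt_Suc)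
      show "\<forall>i. Suc i < length (map (qpt a ?n) [0..<Suc ?L] @ [(a,b)]) \<longrightarrow>
          qadj ((map (qpt a ?n) [0..<Suc ?L] @ [(a,b)]) ! i) ((map (qpt a ?n) [0..<Suc ?L] @ [(a,b)]) ! Suc i)"
        by (rule chain_map_app[OF st adj])
    qed
  qed
qed


lemma genR_err:
  assumes a0: "0 < a" and b0: "0 < b" and v: "v \<in> genR a b"
  shows "\<exists>t::real. 0 \<le> t \<and> t \<le> 1 \<and> \<bar>real (fst v) - t * real a\<bar> \<le> 3/2 \<and> \<bar>real (snd v) - t * real b\<bar> \<le> 3/2"
proof -
  let ?n = "a + b" and ?L = "Lv a b"
  have an: "a < ?n" using b0 by simp
  have nr: "0 < real ?n" using an by simp
  consider "v = (a,b)" | m where "m \<le> ?L" "v = qpt a ?n m" using v unfolding genR_def by auto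
  then show ?thesis
  proof cases
    case 1 then show ?thesis by (intro exI[of _ 1]) simp
  next
    case (2 m)
    let ?g = "gpos a ?n m"
    have gm: "?g \<le> m" by (rule gpos_le[OF an])
    show ?thesis
    proof (cases "m \<le> ?n")
      case True
      define t where "t = real m / real ?n"
      have t0: "0 \<le> t" "t \<le> 1" unfolding t_def using True nr by auto
      have e: "\<bar>real ?g - real a * real m / real ?n\<bar> \<le> 3/2" by (rule err_bound[OF an])
      have f1: "t * real a = real a * real m / real ?n" unfolding t_def by simp
      have f2: "real (m - ?g) - t * real b = real a * real m / real ?n - real ?g"
      proof -
        have "real (m - ?g) = real m - real ?g" using gm by (simp add: of_nat_diff)
        moreover have "t * real b = real m - real a * real m / real ?n"
          unfolding t_def using nr by (simp add: field_simps)
        ultimately show ?thesis by simp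
      qed
      show ?thesis
      proof (intro exI[of _ t] conjI t0)
        show "\<bar>real (fst v) - t * real a\<bar> \<le> 3/2" using e f1 2 by (simp add: qpt_def)
        show "\<bar>real (snd v) - t * real b\<bar> \<le> 3/2" using e f2 2 by (simp add: qpt_def abs_minus_commute)
      qed
    next
      case False
      then have mL: "m = ?n + 1" "?L = ?n + 1" using 2 Lv_cases[OF a0 b0] by auto
      then have g: "?g = a \<or> ?g = a + 1" using Lv_cases[OF a0 b0] by auto
      show ?thesis
      proof (intro exI[of _ 1] conjI)
        show "\<bar>real (fst v) - 1 * real a\<bar> \<le> 3/2" using g 2 by (auto simp: qpt_def)
        show "\<bar>real (snd v) - 1 * real b\<bar> \<le> 3/2" using g 2 mL by (auto simp: qpt_def of_nat_diff)
      qed simp_all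
    qed
  qed
qed

lemma genR_sub:
  assumes a0: "0 < a" and b0: "0 < b" and q: "q \<in> genR a b"
  shows "(fst q = 0 \<and> snd q = 0) \<or> q = (1,0) \<or> q = (a,b) \<or>
    (0 < fst q \<and> 0 < snd q \<and> q \<noteq> (2,2) \<and> genR (fst q) (snd q) \<subseteq> genR a b)"
proof -
  let ?n = "a + b" and ?L = "Lv a b"
  have an: "a < ?n" using b0 by simp
  consider "q = (a,b)" | m where "m \<le> ?L" "q = qpt a ?n m" using q unfolding genR_def by auto
  then show ?thesis
  proof cases
    case 1 then show ?thesis by simp
  next
    case (2 m)
    consider "m = 0" | "m = 1" | "2 \<le> m" by linarith
    then show ?thesis
    proof cases
      case 1 then show ?thesis using 2 by (simp add: qpt_0)
    next
      case 2
      have "q = qpt a ?n 1" using \<open>q = qpt a ?n m\<close> 2 by simp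
      then have "q = (1,0)" by (simp only: qpt_1)
      then show ?thesis by simp
    next
      case 3
      let ?g = "gpos a ?n m"
      have rg: "1 \<le> ?g" "?g + 1 \<le> m" using gpos_range[OF 3 an] by auto
      have q': "q = (?g, m - ?g)" using 2 by (simp add: qpt_def)
      have ne22: "q \<noteq> (2,2)"
      proof
        assume "q = (2,2)"
        then have "?g = 2" "m = 4" using q' rg by auto
        then show False using gpos_odd4[OF an] by simp
      qed
      have sm: "?g + (m - ?g) = m" using rg by simp
      have gm: "?g < m" using rg by simp
      have offq: "gpos ?g m m = ?g" using gpos_official[OF 3 an, of m] by simp
      have Lq: "Lv ?g (m - ?g) = m" using offq sm unfolding Lv_def by simp
      have "genR ?g (m - ?g) \<subseteq> genR a b"
      proof
        fix w assume "w \<in> genR ?g (m - ?g)"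
        then consider "w = (?g, m - ?g)" | j where "j \<le> m" "w = qpt ?g m j"
          unfolding genR_def Lq sm by auto
        then show "w \<in> genR a b"
        proof cases
          case 1 then show ?thesis using q q' by simp
        next
          case (2 j)
          have "qpt ?g m j = qpt a ?n j" unfolding qpt_def using gpos_official[OF 3 an 2(1)] by simp
          then show ?thesis using 2 \<open>m \<le> ?L\<close> unfolding genR_def by auto
        qed
      qed
      then show ?thesis using q' rg ne22 by auto
    qed
  qed
qed


definition SP :: "(nat \<times> nat) list" where
  "SP = [(0,0),(1,0),(2,0),(3,0),(3,1),(2,1),(1,1),(1,2),(2,2)]"

definition Rq :: "nat \<times> nat \<Rightarrow> (nat \<times> nat) set" where
  "Rq p = (if fst p = 0 then {(0,j) | j. j \<le> snd p}
           else if snd p = 0 then {(j,0) | j. j \<le> fst p}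
           else if p = (2,2) then set SP else genR (fst p) (snd p))"

fun qchain :: "(nat \<times> nat) list \<Rightarrow> bool" where
  "qchain (x # y # zs) = (qadj x y \<and> qchain (y # zs))"
| "qchain _ = True"

lemma qchain_nth: "qchain xs \<Longrightarrow> \<forall>i. Suc i < length xs \<longrightarrow> qadj (xs ! i) (xs ! Suc i)"
proof (induction xs rule: qchain.induct)
  case (1 x y zs)
  show ?case
  proof (intro allI impI)
    fix i assume i: "Suc i < length (x # y # zs)"
    show "qadj ((x # y # zs) ! i) ((x # y # zs) ! Suc i)"
    proof (cases i)
      case 0 then show ?thesis using "1.prems" by simp
    next
      case (Suc k)
      then show ?thesis using "1.IH" "1.prems" i by simp
    qed
  qed
qed auto

lemma hh234: "hh 2 = 1" "hh 3 = 2" "hh 4 = 2"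
proof -
  have "blk 2 = 0" by (rule blk_eq) auto
  then show "hh 2 = 1" by (simp add: hh_def)
  have "blk 3 = 1" by (rule blk_eq) auto
  then show "hh 3 = 2" by (simp add: hh_def)
  have "blk 4 = 1" by (rule blk_eq) auto
  then show "hh 4 = 2" by (simp add: hh_def)
qed




lemma gvals: "gpos 3 4 2 = 1" "gpos 3 4 3 = 2" "gpos 3 4 4 = 3" "gpos 1 3 2 = 1" "gpos 1 3 3 = 1"
  by (simp_all add: gpos_def cidx_def hh234)

lemma qvals: "qpt 3 4 2 = (1,1)" "qpt 3 4 3 = (2,1)" "qpt 3 4 4 = (3,1)" "qpt 1 3 2 = (1,1)" "qpt 1 3 3 = (1,2)"
  unfolding qpt_def gvals by simp_all

lemma L31: "Lv 3 1 = 4"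
proof -
  have e: "(3::nat) + 1 = 4" by simp
  show ?thesis unfolding Lv_def by (simp only: e gvals(3) simp_thms if_True)
qed

lemma L12: "Lv 1 2 = 3"
proof -
  have e: "(1::nat) + 2 = 3" by simp
  show ?thesis unfolding Lv_def by (simp only: e gvals(5) simp_thms if_True)
qed

lemma at4: "{..4::nat} = {0,1,2,3,4}" by auto
lemma at3: "{..3::nat} = {0,1,2,3}" by auto

lemma genR31: "genR 3 1 = {(0,0),(1,0),(1,1),(2,1),(3,1)}"
proof -
  have e: "(3::nat) + 1 = 4" by simp
  show ?thesis unfolding genR_def L31 at4 e image_insert image_empty qvals qpt_0 qpt_1 by auto
qed

lemma genR12: "genR 1 2 = {(0,0),(1,0),(1,1),(1,2)}"
proof -
  have e: "(1::nat) + 2 = 3" by simp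
  show ?thesis unfolding genR_def L12 at3 e image_insert image_empty qvals qpt_0 qpt_1 by auto
qed


lemma Lv_ge1: assumes "0 < a" "0 < b" shows "1 \<le> Lv a b"
  using Lv_cases[OF assms] assms by auto

lemma genR_00_10: assumes "0 < a" "0 < b" shows "(0,0) \<in> genR a b" "(1,0) \<in> genR a b"
proof -
  have "0 \<in> {..Lv a b}" "1 \<in> {..Lv a b}" using Lv_ge1[OF assms] by auto
  then show "(0,0) \<in> genR a b" "(1,0) \<in> genR a b" unfolding genR_def
    using qpt_0[of a "a+b"] qpt_1[of a "a+b"] by (metis UnI1 image_eqI)+
qed

lemma axis_path0: "qpath {(0,j) | j. j \<le> b} (0,b)"
  unfolding qpath_def
proof (intro exI conjI)
  let ?xs = "map (\<lambda>j. (0::nat, j)) [0..<Suc b]"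
  show "?xs \<noteq> []" by simp
  show "distinct ?xs" by (simp add: distinct_map inj_on_def del: upt_Suc)
  show "hd ?xs = (0,0)" by (simp add: hd_map upt_conv_Cons del: upt_Suc)
  show "last ?xs = (0,b)" by (simp add: last_map del: upt_Suc)
  show "set ?xs = {(0,j) | j. j \<le> b}" by (auto simp del: upt_Suc)
  show "\<forall>i. Suc i < length ?xs \<longrightarrow> qadj (?xs ! i) (?xs ! Suc i)"
    by (rule chain_map) (simp add: qadj_def)
qed

lemma axis_path1: "qpath {(j,0) | j. j \<le> a} (a,0)"
  unfolding qpath_def
proof (intro exI conjI)
  let ?xs = "map (\<lambda>j. (j, 0::nat)) [0..<Suc a]"
  show "?xs \<noteq> []" by simp
  show "distinct ?xs" by (simp add: distinct_map inj_on_def del: upt_Suc)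
  show "hd ?xs = (0,0)" by (simp add: hd_map upt_conv_Cons del: upt_Suc)
  show "last ?xs = (a,0)" by (simp add: last_map del: upt_Suc)
  show "set ?xs = {(j,0) | j. j \<le> a}" by (auto simp del: upt_Suc)
  show "\<forall>i. Suc i < length ?xs \<longrightarrow> qadj (?xs ! i) (?xs ! Suc i)"
    by (rule chain_map) (simp add: qadj_def)
qed

lemma SP_path: "qpath (set SP) (2,2)"
  unfolding qpath_def
proof (intro exI conjI)
  show "SP \<noteq> []" "distinct SP" "hd SP = (0,0)" "last SP = (2,2)" "set SP = set SP"
    by (simp_all add: SP_def)
  show "\<forall>i. Suc i < length SP \<longrightarrow> qadj (SP ! i) (SP ! Suc i)"
    by (rule qchain_nth) (simp add: SP_def qadj_def)
qed

lemma Rq_path: "qpath (Rq p) p"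
proof -
  obtain a b where p: "p = (a,b)" by (cases p)
  show ?thesis
  proof (cases "a = 0")
    case True then show ?thesis using axis_path0[of b] p by (simp add: Rq_def)
  next
    case a: False
    show ?thesis
    proof (cases "b = 0")
      case True then show ?thesis using axis_path1[of a] p a by (simp add: Rq_def)
    next
      case b: False
      show ?thesis
      proof (cases "p = (2,2)")
        case True then show ?thesis using SP_path by (simp add: Rq_def)
      next
        case False then show ?thesis using genR_path[of a b] p a b by (auto simp: Rq_def)
      qed
    qed
  qed
qed

lemma Rq_gen: "0 < a \<Longrightarrow> 0 < b \<Longrightarrow> (a,b) \<noteq> (2,2) \<Longrightarrow> Rq (a,b) = genR a b"
  by (auto simp: Rq_def)

lemma Rq_00: "Rq (0,0) = {(0,0)}" by (auto simp: Rq_def)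
lemma Rq_10: "Rq (1,0) = {(0,0),(1,0)}" by (auto simp: Rq_def)

lemma genR_Rq_sub: assumes "0 < a" "0 < b" "q \<in> genR a b" "(a,b) \<noteq> (2,2)" shows "Rq q \<subseteq> genR a b"
proof -
  from genR_sub[OF assms(1-3)] consider "fst q = 0 \<and> snd q = 0" | "q = (1,0)" | "q = (a,b)"
    | "0 < fst q \<and> 0 < snd q \<and> q \<noteq> (2,2) \<and> genR (fst q) (snd q) \<subseteq> genR a b"
    by (elim disjE) blast+
  then show ?thesis
  proof cases
    case 1 then have "q = (0,0)" by (cases q) auto
    then show ?thesis using genR_00_10[OF assms(1,2)] Rq_00 by simp
  next
    case 2 then show ?thesis using genR_00_10[OF assms(1,2)] Rq_10 by simp
  next
    case 3 then show ?thesis using assms by (simp add: Rq_gen)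
  next
    case 4
    obtain x y where q: "q = (x,y)" by (cases q)
    then show ?thesis using 4 by (simp add: Rq_gen)
  qed
qed


lemma SP_set: "set SP = {(0,0),(1,0),(2,0),(3,0),(3,1),(2,1),(1,1),(1,2),(2,2)}"
  by (simp add: SP_def)

lemma Rq_22: "Rq (2,2) = set SP" by (simp add: Rq_def)

lemma ax3: "{(j,0::nat) | j. j \<le> (3::nat)} = {(0,0),(1,0),(2,0),(3,0)}"
proof -
  have "\<And>j::nat. j \<le> 3 \<longleftrightarrow> j = 0 \<or> j = 1 \<or> j = 2 \<or> j = 3" by auto
  then show ?thesis by auto
qed
lemma ax2: "{(j,0::nat) | j. j \<le> (2::nat)} = {(0,0),(1,0),(2,0)}"
proof -
  have "\<And>j::nat. j \<le> 2 \<longleftrightarrow> j = 0 \<or> j = 1 \<or> j = 2" by auto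
  then show ?thesis by auto
qed

lemma Rq_SP_sub: assumes "q \<in> set SP" shows "Rq q \<subseteq> set SP"
proof -
  have g31: "Rq (3,1) = genR 3 1" by (simp add: Rq_gen)
  have g12: "Rq (1,2) = genR 1 2" by (simp add: Rq_gen)
  have s31: "genR 3 1 \<subseteq> set SP" unfolding genR31 SP_set by auto
  have s12: "genR 1 2 \<subseteq> set SP" unfolding genR12 SP_set by auto
  have m21: "(2,1) \<in> genR 3 1" unfolding genR31 by simp
  have m11: "(1,1) \<in> genR 3 1" unfolding genR31 by simp
  have r21: "Rq (2,1) \<subseteq> genR 3 1" by (rule genR_Rq_sub[OF _ _ m21]) simp_all
  have r11: "Rq (1,1) \<subseteq> genR 3 1" by (rule genR_Rq_sub[OF _ _ m11]) simp_all
  have r30: "Rq (3,0) = {(0,0),(1,0),(2,0),(3,0)}" using ax3 by (simp add: Rq_def)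
  have r20: "Rq (2,0) = {(0,0),(1,0),(2,0)}" using ax2 by (simp add: Rq_def)
  from assms have "q = (0,0) \<or> q = (1,0) \<or> q = (2,0) \<or> q = (3,0) \<or> q = (3,1) \<or> q = (2,1) \<or> q = (1,1) \<or> q = (1,2) \<or> q = (2,2)"
    unfolding SP_set by simp
  then show ?thesis
  proof (elim disjE)
    assume "q = (0,0)" then show ?thesis using Rq_00 SP_set by simp
  next
    assume "q = (1,0)" then show ?thesis using Rq_10 SP_set by simp
  next
    assume "q = (2,0)" then show ?thesis using r20 SP_set by simp
  next
    assume "q = (3,0)" then show ?thesis using r30 SP_set by simp
  next
    assume "q = (3,1)" then show ?thesis using g31 s31 by simp
  next
    assume "q = (2,1)" then show ?thesis using r21 s31 by simp
  next
    assume "q = (1,1)" then show ?thesis using r11 s31 by simp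
  next
    assume "q = (1,2)" then show ?thesis using g12 s12 by simp
  next
    assume "q = (2,2)" then show ?thesis using Rq_22 by simp
  qed
qed

lemma Rq_sub: assumes "q \<in> Rq p" shows "Rq q \<subseteq> Rq p"
proof -
  obtain a b where p: "p = (a,b)" by (cases p)
  show ?thesis
  proof (cases "a = 0")
    case True
    then obtain j where q: "q = (0,j)" "j \<le> b" using assms p by (auto simp: Rq_def)
    then show ?thesis using True p by (auto simp: Rq_def)
  next
    case a: False
    show ?thesis
    proof (cases "b = 0")
      case True
      then obtain j where q: "q = (j,0)" "j \<le> a" using assms p a by (auto simp: Rq_def)
      then show ?thesis using True p a by (auto simp: Rq_def)
    next
      case b: False
      show ?thesis
      proof (cases "p = (2,2)")
        case True then show ?thesis using Rq_SP_sub assms Rq_22 by simp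
      next
        case False
        then have "Rq p = genR a b" using a b p by (simp add: Rq_gen)
        then show ?thesis using genR_Rq_sub[of a b q] a b assms False p by simp
      qed
    qed
  qed
qed

lemma Rq_axis: "(fst p = 0 \<longrightarrow> (\<forall>r\<in>Rq p. fst r = 0)) \<and> (snd p = 0 \<longrightarrow> (\<forall>r\<in>Rq p. snd r = 0))"
  by (auto simp: Rq_def)

lemma SP_err: assumes "v \<in> set SP"
  shows "\<exists>t::real. 0 \<le> t \<and> t \<le> 1 \<and> \<bar>real (fst v) - t * 2\<bar> \<le> 3/2 \<and> \<bar>real (snd v) - t * 2\<bar> \<le> 3/2"
proof -
  from assms have "v = (0,0) \<or> v = (1,0) \<or> v = (2,0) \<or> v = (3,0) \<or> v = (3,1) \<or> v = (2,1) \<or> v = (1,1) \<or> v = (1,2) \<or> v = (2,2)"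
    unfolding SP_set by simp
  then show ?thesis
  proof (elim disjE)
    assume "v = (0,0)" then show ?thesis by (intro exI[of _ 0]) simp
  next
    assume "v = (1,0)" then show ?thesis by (intro exI[of _ "1/4"]) simp
  next
    assume "v = (2,0)" then show ?thesis by (intro exI[of _ "1/2"]) simp
  next
    assume "v = (3,0)" then show ?thesis by (intro exI[of _ "3/4"]) simp
  next
    assume "v = (3,1)" then show ?thesis by (intro exI[of _ "1"]) simp
  next
    assume "v = (2,1)" then show ?thesis by (intro exI[of _ "3/4"]) simp
  next
    assume "v = (1,1)" then show ?thesis by (intro exI[of _ "1/2"]) simp
  next
    assume "v = (1,2)" then show ?thesis by (intro exI[of _ "3/4"]) simp
  next
    assume "v = (2,2)" then show ?thesis by (intro exI[of _ "1"]) simp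
  qed
qed

lemma Rq_err: assumes "v \<in> Rq p"
  shows "\<exists>t::real. 0 \<le> t \<and> t \<le> 1 \<and> \<bar>real (fst v) - t * real (fst p)\<bar> \<le> 3/2 \<and> \<bar>real (snd v) - t * real (snd p)\<bar> \<le> 3/2"
proof -
  obtain a b where p: "p = (a,b)" by (cases p)
  show ?thesis
  proof (cases "a = 0")
    case True
    then obtain j where v: "v = (0,j)" "j \<le> b" using assms p by (auto simp: Rq_def)
    show ?thesis
    proof (cases "b = 0")
      case True then show ?thesis using v p \<open>a = 0\<close> by (intro exI[of _ 0]) simp
    next
      case False
      then show ?thesis using v p \<open>a = 0\<close> by (intro exI[of _ "real j / real b"]) auto
    qed
  next
    case a: False
    show ?thesis
    proof (cases "b = 0")
      case True
      then obtain j where v: "v = (j,0)" "j \<le> a" using assms p a by (auto simp: Rq_def)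
      then show ?thesis using p a True by (intro exI[of _ "real j / real a"]) auto
    next
      case b: False
      show ?thesis
      proof (cases "p = (2,2)")
        case True then show ?thesis using SP_err[of v] assms Rq_22 by simp
      next
        case False
        then have "Rq p = genR a b" using a b p by (simp add: Rq_gen)
        then show ?thesis using genR_err[of a b v] a b assms p by simp
      qed
    qed
  qed
qed

lemma special_in: "(3,0) \<in> Rq (2,2)" by (simp add: Rq_22 SP_set)




definition sgnf :: "int \<Rightarrow> int" where "sgnf d = (if d < 0 then -1 else 1)"

definition absq :: "gpt \<Rightarrow> gpt \<Rightarrow> nat \<times> nat" where
  "absq r0 p = (nat \<bar>fst p - fst r0\<bar>, nat \<bar>snd p - snd r0\<bar>)"

definition liftp :: "gpt \<Rightarrow> gpt \<Rightarrow> nat \<times> nat \<Rightarrow> gpt" where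
  "liftp r0 p v = (fst r0 + sgnf (fst p - fst r0) * int (fst v), snd r0 + sgnf (snd p - snd r0) * int (snd v))"

definition RR :: "gpt \<Rightarrow> gpt \<Rightarrow> gpt set" where
  "RR r0 p = liftp r0 p ` Rq (absq r0 p)"

lemma sgnf_abs: "sgnf d * int (nat \<bar>d\<bar>) = d" by (simp add: sgnf_def)
lemma sgnf_sq: "\<bar>sgnf d * x\<bar> = \<bar>x\<bar>" by (simp add: sgnf_def abs_mult)

lemma liftp_0: "liftp r0 p (0,0) = r0" by (simp add: liftp_def)
lemma sgnf_abs': "sgnf d * \<bar>d\<bar> = d" by (simp add: sgnf_def)
lemma liftp_abs: "liftp r0 p (absq r0 p) = p" by (simp add: liftp_def absq_def sgnf_abs')

lemma liftp_adj: "grid_adj (liftp r0 p u) (liftp r0 p w) \<longleftrightarrow> qadj u w"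
proof -
  have "fst (liftp r0 p u) - fst (liftp r0 p w) = sgnf (fst p - fst r0) * (int (fst u) - int (fst w))"
    by (simp add: liftp_def algebra_simps)
  moreover have "snd (liftp r0 p u) - snd (liftp r0 p w) = sgnf (snd p - snd r0) * (int (snd u) - int (snd w))"
    by (simp add: liftp_def algebra_simps)
  ultimately show ?thesis unfolding grid_adj_def qadj_def by (simp only: sgnf_sq)
qed

lemma liftp_inj: "inj (liftp r0 p)"
proof (rule injI)
  fix u w assume e: "liftp r0 p u = liftp r0 p w"
  have s1: "sgnf (fst p - fst r0) \<noteq> 0" "sgnf (snd p - snd r0) \<noteq> 0" by (auto simp: sgnf_def)
  from e have "sgnf (fst p - fst r0) * int (fst u) = sgnf (fst p - fst r0) * int (fst w)"
    "sgnf (snd p - snd r0) * int (snd u) = sgnf (snd p - snd r0) * int (snd w)"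
    by (auto simp: liftp_def)
  then have "fst u = fst w" "snd u = snd w" using s1 by auto
  then show "u = w" by (simp add: prod_eq_iff)
qed

lemma RR_path: "is_grid_path_set (RR r0 p) r0 p"
proof -
  obtain xs where xs: "xs \<noteq> []" "distinct xs" "hd xs = (0,0)" "last xs = absq r0 p" "set xs = Rq (absq r0 p)"
    "\<forall>i. Suc i < length xs \<longrightarrow> qadj (xs ! i) (xs ! Suc i)"
    using Rq_path[of "absq r0 p"] unfolding qpath_def by blast
  show ?thesis unfolding is_grid_path_set_def
  proof (intro exI conjI)
    show "map (liftp r0 p) xs \<noteq> []" using xs by simp
    have "inj_on (liftp r0 p) (set xs)" using liftp_inj by (rule inj_on_subset) simp
    then show "distinct (map (liftp r0 p) xs)" using xs by (simp add: distinct_map)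
    show "hd (map (liftp r0 p) xs) = r0" using xs by (simp add: hd_map liftp_0)
    show "last (map (liftp r0 p) xs) = p" using xs by (simp add: last_map liftp_abs)
    show "set (map (liftp r0 p) xs) = RR r0 p" using xs by (simp add: RR_def)
    show "\<forall>i. Suc i < length (map (liftp r0 p) xs) \<longrightarrow>
        grid_adj (map (liftp r0 p) xs ! i) (map (liftp r0 p) xs ! Suc i)"
      using xs by (simp add: liftp_adj)
  qed
qed

lemma absq_lift: "absq r0 (liftp r0 p v) = v"
  by (simp add: absq_def liftp_def sgnf_sq prod_eq_iff)

lemma lift_agree:
  assumes "w \<in> Rq v"
  shows "liftp r0 (liftp r0 p v) w = liftp r0 p w"
proof -
  let ?q = "liftp r0 p v"
  have ax: "(fst v = 0 \<longrightarrow> fst w = 0) \<and> (snd v = 0 \<longrightarrow> snd w = 0)" using Rq_axis[of v] assms by auto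
  have c1: "sgnf (fst ?q - fst r0) * int (fst w) = sgnf (fst p - fst r0) * int (fst w)"
  proof (cases "fst v = 0")
    case True then show ?thesis using ax by simp
  next
    case False
    then have "fst ?q - fst r0 = sgnf (fst p - fst r0) * int (fst v)" "0 < int (fst v)"
      by (auto simp: liftp_def)
    then have "sgnf (fst ?q - fst r0) = sgnf (fst p - fst r0)"
      by (auto simp: sgnf_def mult_less_0_iff)
    then show ?thesis by simp
  qed
  have c2: "sgnf (snd ?q - snd r0) * int (snd w) = sgnf (snd p - snd r0) * int (snd w)"
  proof (cases "snd v = 0")
    case True then show ?thesis using ax by simp
  next
    case False
    then have "snd ?q - snd r0 = sgnf (snd p - snd r0) * int (snd v)" "0 < int (snd v)"
      by (auto simp: liftp_def)
    then have "sgnf (snd ?q - snd r0) = sgnf (snd p - snd r0)"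
      by (auto simp: sgnf_def mult_less_0_iff)
    then show ?thesis by simp
  qed
  have e1: "liftp r0 ?q w = (fst r0 + sgnf (fst ?q - fst r0) * int (fst w), snd r0 + sgnf (snd ?q - snd r0) * int (snd w))"
    by (rule liftp_def)
  have e2: "liftp r0 p w = (fst r0 + sgnf (fst p - fst r0) * int (fst w), snd r0 + sgnf (snd p - snd r0) * int (snd w))"
    by (rule liftp_def)
  show ?thesis unfolding e1 e2 c1 c2 ..
qed

lemma RR_sub: assumes "q \<in> RR r0 p" shows "RR r0 q \<subseteq> RR r0 p"
proof -
  obtain v where v: "v \<in> Rq (absq r0 p)" "q = liftp r0 p v" using assms unfolding RR_def by auto
  have "RR r0 q = liftp r0 q ` Rq v" unfolding RR_def v(2) absq_lift ..
  also have "\<dots> = liftp r0 p ` Rq v" using lift_agree v(2) by (auto simp: image_def)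
  also have "\<dots> \<subseteq> liftp r0 p ` Rq (absq r0 p)" using Rq_sub[OF v(1)] by auto
  finally show ?thesis unfolding RR_def .
qed

lemma RR_axis:
  "(fst p = fst r0 \<longrightarrow> (\<forall>r\<in>RR r0 p. fst r = fst r0)) \<and> (snd p = snd r0 \<longrightarrow> (\<forall>r\<in>RR r0 p. snd r = snd r0))"
  using Rq_axis[of "absq r0 p"] by (auto simp: RR_def liftp_def absq_def)

lemma RR_WCDR: "WCDR r0 (RR r0)"
  unfolding WCDR_def using RR_path RR_sub RR_axis by blast


lemma linf_nonneg: "0 \<le> linf_dist u v" by (simp add: linf_dist_def)

lemma seg_point:
  assumes "0 \<le> t" "t \<le> 1"
  shows "(1 - t) *\<^sub>R rpt r0 + t *\<^sub>R rpt p \<in> euclid_seg r0 p"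
  unfolding euclid_seg_def closed_segment_def using assms by blast

lemma RR_pt_err: assumes "u \<in> RR r0 p"
  shows "linf_dist_set (rpt u) (euclid_seg r0 p) \<le> 3/2"
proof -
  let ?A = "absq r0 p"
  obtain v where v: "v \<in> Rq ?A" "u = liftp r0 p v" using assms unfolding RR_def by auto
  obtain t :: real where t: "0 \<le> t" "t \<le> 1" "\<bar>real (fst v) - t * real (fst ?A)\<bar> \<le> 3/2"
    "\<bar>real (snd v) - t * real (snd ?A)\<bar> \<le> 3/2" using Rq_err[OF v(1)] by blast
  define w where "w = (1 - t) *\<^sub>R rpt r0 + t *\<^sub>R rpt p"
  have wI: "w \<in> euclid_seg r0 p" unfolding w_def by (rule seg_point[OF t(1,2)])
  define s1 where "s1 = real_of_int (sgnf (fst p - fst r0))"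
  define s2 where "s2 = real_of_int (sgnf (snd p - snd r0))"
  have s1a: "\<bar>s1\<bar> = 1" "\<bar>s2\<bar> = 1" unfolding s1_def s2_def by (auto simp: sgnf_def)
  have hp1: "real_of_int (fst p) - real_of_int (fst r0) = s1 * real (fst ?A)"
  proof -
    have "sgnf (fst p - fst r0) * int (nat \<bar>fst p - fst r0\<bar>) = fst p - fst r0" by (rule sgnf_abs)
    then have "real_of_int (sgnf (fst p - fst r0) * int (nat \<bar>fst p - fst r0\<bar>)) = real_of_int (fst p - fst r0)" by simp
    then show ?thesis unfolding s1_def absq_def by simp
  qed
  have hp2: "real_of_int (snd p) - real_of_int (snd r0) = s2 * real (snd ?A)"
  proof -
    have "sgnf (snd p - snd r0) * int (nat \<bar>snd p - snd r0\<bar>) = snd p - snd r0" by (rule sgnf_abs)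
    then have "real_of_int (sgnf (snd p - snd r0) * int (nat \<bar>snd p - snd r0\<bar>)) = real_of_int (snd p - snd r0)" by simp
    then show ?thesis unfolding s2_def absq_def by simp
  qed
  have d1: "fst (rpt u) - fst w = s1 * (real (fst v) - t * real (fst ?A))"
  proof -
    have "fst (rpt u) = real_of_int (fst r0) + s1 * real (fst v)"
      unfolding v(2) rpt_def liftp_def s1_def by simp
    moreover have "fst w = real_of_int (fst r0) + t * (real_of_int (fst p) - real_of_int (fst r0))"
      unfolding w_def rpt_def by (simp add: algebra_simps)
    ultimately show ?thesis using hp1 by (simp add: algebra_simps)
  qed
  have d2: "snd (rpt u) - snd w = s2 * (real (snd v) - t * real (snd ?A))"
  proof -
    have "snd (rpt u) = real_of_int (snd r0) + s2 * real (snd v)"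
      unfolding v(2) rpt_def liftp_def s2_def by simp
    moreover have "snd w = real_of_int (snd r0) + t * (real_of_int (snd p) - real_of_int (snd r0))"
      unfolding w_def rpt_def by (simp add: algebra_simps)
    ultimately show ?thesis using hp2 by (simp add: algebra_simps)
  qed
  have "linf_dist (rpt u) w \<le> 3/2"
    unfolding linf_dist_def d1 d2 using t s1a by (simp add: abs_mult)
  moreover have "linf_dist_set (rpt u) (euclid_seg r0 p) \<le> linf_dist (rpt u) w"
    unfolding linf_dist_set_def
    by (rule cINF_lower[OF _ wI]) (auto intro: bdd_belowI[of _ 0] simp: linf_nonneg)
  ultimately show ?thesis by linarith
qed

lemma RR_nonempty: "RR r0 p \<noteq> {}"
  using RR_path[of r0 p] unfolding is_grid_path_set_def by auto

lemma RR_seg_err: "seg_error r0 (RR r0) p \<le> 3/2"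
  unfolding seg_error_def by (rule cSUP_least[OF RR_nonempty]) (rule RR_pt_err)

lemma RR_bdd: "bdd_above (range (seg_error r0 (RR r0)))"
proof (rule bdd_aboveI[of _ "3/2"])
  fix x assume "x \<in> range (seg_error r0 (RR r0))"
  then obtain p where "x = seg_error r0 (RR r0) p" by blast
  then show "x \<le> 3/2" using RR_seg_err[of r0 p] by simp
qed

lemma RR_special: "3/2 \<le> seg_error r0 (RR r0) (fst r0 + 2, snd r0 + 2)"
proof -
  let ?p = "(fst r0 + 2, snd r0 + 2)" and ?u = "(fst r0 + 3, snd r0)"
  have A: "absq r0 ?p = (2,2)" by (simp add: absq_def)
  have uin: "?u \<in> RR r0 ?p"
  proof -
    have "liftp r0 ?p (3,0) = ?u" by (simp add: liftp_def sgnf_def)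
    then show ?thesis unfolding RR_def A using special_in by (metis image_eqI)
  qed
  have low: "3/2 \<le> linf_dist_set (rpt ?u) (euclid_seg r0 ?p)"
    unfolding linf_dist_set_def
  proof (rule cINF_greatest)
    show "euclid_seg r0 ?p \<noteq> {}" unfolding euclid_seg_def by simp
  next
    fix w assume "w \<in> euclid_seg r0 ?p"
    then obtain t :: real where t: "0 \<le> t" "t \<le> 1" "w = (1 - t) *\<^sub>R rpt r0 + t *\<^sub>R rpt ?p"
      unfolding euclid_seg_def closed_segment_def by blast
    have w1: "fst (rpt ?u) - fst w = 3 - 2 * t" unfolding t(3) rpt_def by (simp add: algebra_simps)
    have w2: "snd (rpt ?u) - snd w = - 2 * t" unfolding t(3) rpt_def by (simp add: algebra_simps)
    show "3/2 \<le> linf_dist (rpt ?u) w" unfolding linf_dist_def w1 w2 by (simp add: abs_if max_def)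
  qed
  also have "\<dots> \<le> seg_error r0 (RR r0) ?p"
    unfolding seg_error_def
  proof (rule cSUP_upper[OF uin], rule bdd_aboveI[of _ "3/2"])
    fix x assume "x \<in> (\<lambda>v. linf_dist_set (rpt v) (euclid_seg r0 ?p)) ` RR r0 ?p"
    then obtain v where "v \<in> RR r0 ?p" "x = linf_dist_set (rpt v) (euclid_seg r0 ?p)" by blast
    then show "x \<le> 3/2" using RR_pt_err by simp
  qed
  finally show ?thesis .
qed

theorem theorem1:
  fixes r0 :: gpt
  shows "\<exists>R. WCDR r0 R \<and> bdd_above (range (seg_error r0 R)) \<and>
             (SUP p. seg_error r0 R p) = 3 / 2"
proof (intro exI conjI)
  show "WCDR r0 (RR r0)" by (rule RR_WCDR)
  show "bdd_above (range (seg_error r0 (RR r0)))" by (rule RR_bdd)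
  show "(SUP p. seg_error r0 (RR r0) p) = 3 / 2"
  proof (rule antisym)
    show "(SUP p. seg_error r0 (RR r0) p) \<le> 3 / 2" by (rule cSUP_least) (simp, rule RR_seg_err)
    show "3 / 2 \<le> (SUP p. seg_error r0 (RR r0) p)"
      by (rule cSUP_upper2[OF RR_bdd UNIV_I RR_special])
  qed
qed


end
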